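(* Let $S\in\mathbb{Z}_{\ge 0}^{n\times n_s}$ and $T\in\mathbb{Z}_{\ge0}^{n\times n_t}$, and let $\mathcal{C}=\{M\in\mathbb{Z}_{\ge0}^{n_s\times n_t} : SM=T\}$, assumed nonempty. Let $\mathcal{F}=\{x\in\mathbb{Z}_{\ge0}^{1\times n_s} : |\{xM : M\in\mathcal{C}\}|=1\}$. Let $x$ be any input (row vector in $\mathbb{Z}_{\ge0}^{1\times n_s}$), let $v\sim\mathcal{N}(0,I_{n_t\times n_t})$ be a random vector, and let $a=\min_{M\in\mathcal{C}} xMv$ and $b=\max_{M\in\mathcal{C}} xMv$. Then with probability 1, $a=b$ if and only if $x\in\mathcal{F}$.
   Context: Each training input (a bag of source atoms over $n_s$ atom types) is encoded as a row vector of counts, forming the rows of $S$; the corresponding outputs (bags over $n_t$ target atom types) form the rows of $T$. A mapping is a nonnegative integer matrix $M$ whose entry $M_{st}$ is the number of copies of target atom $t$ that source atom $s$ maps to; the output on input $x$ is $xM$. Nonemptiness of $\mathcal{C}$ reflects the standing assumption that the training data are noiseless outputs of a true mapping $M^*$. *)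

theory Defs
  imports "HOL-Probability.Probability"
begin

text \<open>Training inputs: rows of S (indexed by 'r, atom types 's); outputs: rows of T
  (atom types 't). A mapping M :: nat^'t^'s; output on input x is x v* M.\<close>

definition consistent_maps ::
  "nat ^ 's ^ 'r \<Rightarrow> nat ^ 't ^ 'r \<Rightarrow> (nat ^ 't ^ 's) set" where
  "consistent_maps S T = {M. S ** M = T}"

definition determined_inputs ::
  "nat ^ 's ^ 'r \<Rightarrow> nat ^ 't ^ 'r \<Rightarrow> (nat ^ 's) set" where
  "determined_inputs S T = {x. card ((\<lambda>M. x v* M) ` consistent_maps S T) = 1}"

definition std_gaussian_vector :: "('t::finite \<Rightarrow> real) measure" where
  "std_gaussian_vector = PiM UNIV (\<lambda>_. std_normal_distribution)"

definition score :: "nat ^ 's \<Rightarrow> nat ^ 't ^ 's \<Rightarrow> ('t \<Rightarrow> real) \<Rightarrow> real" where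
  "score x M v = (\<Sum>t\<in>UNIV. real ((x v* M) $ t) * v t)"

end

theory Submission imports Defs begin

lemma std_normal_singleton: "emeasure std_normal_distribution {a} = 0"
proof -
  have "{a} \<in> null_sets (density lborel std_normal_density)"
    apply (subst null_sets_density_iff)
     apply simp
    apply (rule conjI)
     apply simp
    by (rule eventually_mono[OF AE_lborel_singleton[of a]]) simp
  then show ?thesis by auto
qed

lemma hyperplane_null:
  fixes c :: "'t::finite \<Rightarrow> real"
  assumes c0: "c t0 \<noteq> 0"
  shows "AE v in std_gaussian_vector. (\<Sum>t\<in>UNIV. c t * v t) \<noteq> 0"
proof -
  let ?N = "std_normal_distribution"
  interpret N: prob_space ?N by (rule prob_space_normal_density) simp
  interpret P: product_prob_space "\<lambda>_::'t. ?N" by unfold_locales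
  define g where "g v = (\<Sum>t\<in>UNIV. c t * v t)" for v :: "'t \<Rightarrow> real"
  define H where "H = {v. g v = 0}"
  have gm[measurable]: "g \<in> borel_measurable (PiM UNIV (\<lambda>_. ?N))"
    unfolding g_def by measurable
  have Hm: "H \<in> sets (PiM UNIV (\<lambda>_. ?N))"
  proof -
    have "H = {v \<in> space (PiM UNIV (\<lambda>_. ?N)). g v = 0}" by (auto simp: H_def space_PiM)
    also have "\<dots> \<in> sets (PiM UNIV (\<lambda>_. ?N))" by measurable
    finally show ?thesis .
  qed
  have U: "(UNIV::'t set) = insert t0 (UNIV - {t0})" by auto
  define a where "a x = - (\<Sum>t\<in>UNIV - {t0}. c t * x t) / c t0" for x :: "'t \<Rightarrow> real"
  have ind: "indicator H (x(t0 := y)) = (indicator {a x} y :: ennreal)" for x y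
  proof -
    have "g (x(t0 := y)) = c t0 * y + (\<Sum>t\<in>UNIV - {t0}. c t * x t)"
      unfolding g_def by (subst U, subst sum.insert) (auto intro!: sum.cong)
    then have "x(t0 := y) \<in> H \<longleftrightarrow> y = a x"
      using c0 by (auto simp: H_def a_def field_simps)
    then show ?thesis by (auto simp: indicator_def)
  qed
  have "emeasure (PiM UNIV (\<lambda>_. ?N)) H = integral\<^sup>N (PiM UNIV (\<lambda>_. ?N)) (indicator H)"
    using Hm by simp
  also have "\<dots> = integral\<^sup>N (PiM (insert t0 (UNIV - {t0})) (\<lambda>_. ?N)) (indicator H)"
    using U by simp
  also have "\<dots> = (\<integral>\<^sup>+ x. (\<integral>\<^sup>+ y. indicator H (x(t0 := y)) \<partial>?N) \<partial>(PiM (UNIV - {t0}) (\<lambda>_. ?N)))"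
    by (rule P.product_nn_integral_insert) (use Hm U in auto)
  also have "\<dots> = 0"
    by (simp add: ind std_normal_singleton)
  finally have "H \<in> null_sets (PiM UNIV (\<lambda>_. ?N))" using Hm by auto
  then have "AE v in PiM UNIV (\<lambda>_. ?N). v \<notin> H" by (rule AE_not_in)
  then show ?thesis unfolding std_gaussian_vector_def by (auto simp: H_def g_def)
qed

theorem proposition2:
  fixes S :: "nat ^ 's::finite ^ 'r::finite" and T :: "nat ^ 't::finite ^ 'r"
    and x :: "nat ^ 's"
  assumes "consistent_maps S T \<noteq> {}"
  shows "AE v in std_gaussian_vector.
           (Inf ((\<lambda>M. ereal (score x M v)) ` consistent_maps S T)
              = Sup ((\<lambda>M. ereal (score x M v)) ` consistent_maps S T))
           \<longleftrightarrow> x \<in> determined_inputs S T"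
proof (cases "x \<in> determined_inputs S T")
  case True
  then have "card ((\<lambda>M. x v* M) ` consistent_maps S T) = 1"
    by (simp add: determined_inputs_def)
  then obtain w where w: "(\<lambda>M. x v* M) ` consistent_maps S T = {w}"
    by (rule card_1_singletonE)
  have "(\<lambda>M. ereal (score x M v)) ` consistent_maps S T
        = {ereal (\<Sum>t\<in>UNIV. real (w $ t) * v t)}" for v
  proof -
    note [simp del] = vector_matrix_mult_def
    have "(\<lambda>M. ereal (score x M v)) ` consistent_maps S T
       = (\<lambda>u. ereal (\<Sum>t\<in>UNIV. real (u $ t) * v t)) ` ((\<lambda>M. x v* M) ` consistent_maps S T)"
      by (simp add: image_image score_def)
    then show ?thesis using w by simp
  qed
  then show ?thesis using True by simp
next
  case False
  obtain M0 where M0: "M0 \<in> consistent_maps S T" using assms by auto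
  have "\<exists>M1\<in>consistent_maps S T. x v* M1 \<noteq> x v* M0"
  proof (rule ccontr)
    assume "\<not> ?thesis"
    then have all: "\<forall>M\<in>consistent_maps S T. x v* M = x v* M0" by blast
    have "(\<lambda>M. x v* M) ` consistent_maps S T = {x v* M0}"
    proof (rule set_eqI, rule iffI)
      fix y assume "y \<in> (\<lambda>M. x v* M) ` consistent_maps S T"
      then show "y \<in> {x v* M0}" using all by blast
    next
      fix y assume "y \<in> {x v* M0}"
      then show "y \<in> (\<lambda>M. x v* M) ` consistent_maps S T" using M0 by blast
    qed
    then show False using False by (simp add: determined_inputs_def)
  qed
  then obtain M1 where M1: "M1 \<in> consistent_maps S T" "x v* M1 \<noteq> x v* M0" by blast
  then obtain t0 where t0: "(x v* M1) $ t0 \<noteq> (x v* M0) $ t0" using M1(2) by (metis vec_eq_iff)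
  define c where "c t = real ((x v* M1) $ t) - real ((x v* M0) $ t)" for t
  have "c t0 \<noteq> 0" using t0 by (simp add: c_def)
  from hyperplane_null[of c t0, OF this]
  have "AE v in std_gaussian_vector. score x M1 v \<noteq> score x M0 v"
  proof (rule eventually_mono)
    fix v :: "'t \<Rightarrow> real" assume "(\<Sum>t\<in>UNIV. c t * v t) \<noteq> 0"
    moreover have "(\<Sum>t\<in>UNIV. c t * v t) = score x M1 v - score x M0 v"
      unfolding c_def score_def sum_subtractf[symmetric] by (rule sum.cong) (simp_all add: left_diff_distrib)
    ultimately show "score x M1 v \<noteq> score x M0 v" by simp
  qed
  then show ?thesis
  proof (rule eventually_mono)
    fix v assume ne: "score x M1 v \<noteq> score x M0 v"
    let ?A = "(\<lambda>M. ereal (score x M v)) ` consistent_maps S T"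
    have "Inf ?A \<noteq> Sup ?A"
    proof
      assume eq: "Inf ?A = Sup ?A"
      have e1: "ereal (score x M1 v) \<in> ?A" "ereal (score x M0 v) \<in> ?A" using M0 M1 by auto
      have "Inf ?A \<le> ereal (score x M1 v)" "ereal (score x M1 v) \<le> Sup ?A"
           "Inf ?A \<le> ereal (score x M0 v)" "ereal (score x M0 v) \<le> Sup ?A"
        using e1 by (simp_all add: Inf_lower Sup_upper)
      then have "ereal (score x M1 v) = ereal (score x M0 v)" using eq by (metis (no_types) order_antisym)
      then show False using ne by simp
    qed
    then show "(Inf ?A = Sup ?A) \<longleftrightarrow> x \<in> determined_inputs S T" using False by simp
  qed
qed

end
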